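(* Let $\rho : G \to \mathrm{O}(V)$ be an orthogonal representation of a compact Lie group $G$ on a finite dimensional real Euclidean vector space $(V,\langle\cdot\mid\cdot\rangle)$ with $V^G=\{0\}$. Let $\sigma_1,\ldots,\sigma_n$ be homogeneous generators of $\mathbb{R}[V]^G$ of positive degrees $d_1,\ldots,d_n$, with $\sigma_1(v)=\langle v\mid v\rangle$, and let $\sigma=(\sigma_1,\ldots,\sigma_n)$. Let $\mathcal{C}$ be a class of $C^\infty$-functions as in the context, let $U \subseteq \mathbb{R}^q$ be an open neighborhood of $0$, and let $f=(f_1,\ldots,f_n) : U \to \sigma(V) \subseteq \mathbb{R}^n$ be a $\mathcal{C}$-mapping. Assume that $f_1$ is not identically zero and that, for every $j$ with $f_j$ not identically zero, $f_j(x) = x^{\alpha_j} g_j(x)$ on $U$ for some non-vanishing $g_j \in \mathcal{C}(U,\mathbb{R})$ and some $\alpha_j \in \mathbb{N}^q$. Then there exists $\delta \in \mathbb{N}^q$ such that $\alpha_1 = 2\delta$ and $\alpha_j \ge d_j\delta$ (componentwise) for all $j$ with $f_j$ not identically zero.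
   Context: The class $\mathcal{C}$: for every open $U \subseteq \mathbb{R}^q$ ($q\in\mathbb{N}$) a subalgebra $\mathcal{C}(U)\subseteq C^\infty(U,\mathbb{R})$ containing the real analytic functions and closed under composition, partial derivatives, division by a coordinate (a function vanishing on $\{x_i=a_i\}$ equals $(x_i-a_i)h$ with $h\in\mathcal{C}$), and taking local inverses of mappings with invertible Jacobian, and quasianalytic (a function with vanishing Taylor series at a point vanishes near that point). For $x\in\mathbb{R}^q$, $\alpha\in\mathbb{N}^q$, $x^\alpha = x_1^{\alpha_1}\cdots x_q^{\alpha_q}$. *)

theory Defs
  imports "HOL-Analysis.Analysis" "HOL-Algebra.Group"
begin

definition Rq :: "nat \<Rightarrow> (nat \<Rightarrow> real) set" where
  "Rq q = {x. \<forall>i\<ge>q. x i = 0}"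

text \<open>Open subsets of R^q (sup-norm balls, i.e. the Euclidean topology).\<close>
definition open_q :: "nat \<Rightarrow> (nat \<Rightarrow> real) set \<Rightarrow> bool" where
  "open_q q U \<longleftrightarrow> U \<subseteq> Rq q \<and>
     (\<forall>x\<in>U. \<exists>e>0. \<forall>y\<in>Rq q. (\<forall>i<q. \<bar>y i - x i\<bar> < e) \<longrightarrow> y \<in> U)"

definition cont_q :: "nat \<Rightarrow> (nat \<Rightarrow> real) set \<Rightarrow> ((nat \<Rightarrow> real) \<Rightarrow> real) \<Rightarrow> bool" where
  "cont_q q U h \<longleftrightarrow> (\<forall>x\<in>U. \<forall>e>0. \<exists>r>0. \<forall>y\<in>U.
      (\<forall>i<q. \<bar>y i - x i\<bar> < r) \<longrightarrow> \<bar>h y - h x\<bar> < e)"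

definition partial :: "nat \<Rightarrow> ((nat \<Rightarrow> real) \<Rightarrow> real) \<Rightarrow> (nat \<Rightarrow> real) \<Rightarrow> real" where
  "partial i h x = deriv (\<lambda>t. h (x(i := x i + t))) 0"

fun iter_partial :: "nat list \<Rightarrow> ((nat \<Rightarrow> real) \<Rightarrow> real) \<Rightarrow> (nat \<Rightarrow> real) \<Rightarrow> real" where
  "iter_partial [] h = h"
| "iter_partial (i # is) h = partial i (iter_partial is h)"

definition smooth_q :: "nat \<Rightarrow> (nat \<Rightarrow> real) set \<Rightarrow> ((nat \<Rightarrow> real) \<Rightarrow> real) \<Rightarrow> bool" where
  "smooth_q q U h \<longleftrightarrow> (\<forall>is. set is \<subseteq> {..<q} \<longrightarrow>
      cont_q q U (iter_partial is h) \<and>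
      (\<forall>i<q. \<forall>x\<in>U. (\<lambda>t. iter_partial is h (x(i := x i + t))) differentiable (at 0)))"

definition MI :: "nat \<Rightarrow> (nat \<Rightarrow> nat) set" where
  "MI q = {\<alpha>. \<forall>i\<ge>q. \<alpha> i = 0}"

definition analytic_q :: "nat \<Rightarrow> (nat \<Rightarrow> real) set \<Rightarrow> ((nat \<Rightarrow> real) \<Rightarrow> real) \<Rightarrow> bool" where
  "analytic_q q U h \<longleftrightarrow> (\<forall>a\<in>U. \<exists>r>0. \<exists>c :: (nat \<Rightarrow> nat) \<Rightarrow> real. \<forall>x\<in>U.
      (\<forall>i<q. \<bar>x i - a i\<bar> < r) \<longrightarrow>
      ((\<lambda>\<alpha>. c \<alpha> * (\<Prod>i<q. (x i - a i) ^ \<alpha> i)) has_sum h x) (MI q))"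

definition tuple :: "nat \<Rightarrow> (nat \<Rightarrow> (nat \<Rightarrow> real) \<Rightarrow> real) \<Rightarrow> (nat \<Rightarrow> real) \<Rightarrow> (nat \<Rightarrow> real)" where
  "tuple p \<phi> x = (\<lambda>k. if k < p then \<phi> k x else 0)"

text \<open>The class C: Cls q U is the set of C-functions on the open set U of R^q
  (functions are total, only their values on U matter).\<close>
definition C_class :: "(nat \<Rightarrow> (nat \<Rightarrow> real) set \<Rightarrow> ((nat \<Rightarrow> real) \<Rightarrow> real) set) \<Rightarrow> bool" where
  "C_class Cls \<longleftrightarrow>
    (\<forall>q U. open_q q U \<longrightarrow>
      \<comment> \<open>functions on U: membership only depends on the values on U\<close>
      (\<forall>h h'. h \<in> Cls q U \<and> (\<forall>x\<in>U. h x = h' x) \<longrightarrow> h' \<in> Cls q U) \<and>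
      \<comment> \<open>subalgebra of C^infinity(U)\<close>
      (\<forall>h\<in>Cls q U. smooth_q q U h) \<and>
      (\<forall>h\<in>Cls q U. \<forall>k\<in>Cls q U. (\<lambda>x. h x + k x) \<in> Cls q U \<and> (\<lambda>x. h x * k x) \<in> Cls q U) \<and>
      (\<forall>c. (\<lambda>x. c) \<in> Cls q U) \<and>
      \<comment> \<open>contains the real analytic functions\<close>
      (\<forall>h. analytic_q q U h \<longrightarrow> h \<in> Cls q U) \<and>
      \<comment> \<open>closed under partial derivatives\<close>
      (\<forall>h\<in>Cls q U. \<forall>i<q. partial i h \<in> Cls q U) \<and>
      \<comment> \<open>division by a coordinate\<close>
      (\<forall>h\<in>Cls q U. \<forall>i<q. \<forall>a::real. (\<forall>x\<in>U. x i = a \<longrightarrow> h x = 0) \<longrightarrow>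
          (\<exists>k\<in>Cls q U. \<forall>x\<in>U. h x = (x i - a) * k x)) \<and>
      \<comment> \<open>quasianalyticity\<close>
      (\<forall>h\<in>Cls q U. \<forall>a\<in>U. (\<forall>is. set is \<subseteq> {..<q} \<longrightarrow> iter_partial is h a = 0) \<longrightarrow>
          (\<exists>e>0. \<forall>x\<in>U. (\<forall>i<q. \<bar>x i - a i\<bar> < e) \<longrightarrow> h x = 0)) \<and>
      \<comment> \<open>local inverses of mappings with invertible Jacobian\<close>
      (\<forall>\<phi> a. (\<forall>k<q. \<phi> k \<in> Cls q U) \<and> a \<in> U \<and>
          (\<forall>w\<in>Rq q. (\<forall>k<q. (\<Sum>i<q. partial i (\<phi> k) a * w i) = 0) \<longrightarrow> w = (\<lambda>_. 0)) \<longrightarrow>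
          (\<exists>U0 V0 \<psi>. open_q q U0 \<and> a \<in> U0 \<and> U0 \<subseteq> U \<and> open_q q V0 \<and>
             tuple q \<phi> ` U0 = V0 \<and> (\<forall>k<q. \<psi> k \<in> Cls q V0) \<and> tuple q \<psi> ` V0 = U0 \<and>
             (\<forall>x\<in>U0. tuple q \<psi> (tuple q \<phi> x) = x) \<and>
             (\<forall>y\<in>V0. tuple q \<phi> (tuple q \<psi> y) = y))) \<and>
      \<comment> \<open>closed under composition\<close>
      (\<forall>p W h \<phi>. open_q p W \<and> h \<in> Cls p W \<and> (\<forall>k<p. \<phi> k \<in> Cls q U) \<and>
          (\<forall>x\<in>U. tuple p \<phi> x \<in> W) \<longrightarrow> (\<lambda>x. h (tuple p \<phi> x)) \<in> Cls q U))"

definition monom_V :: "('v::finite \<Rightarrow> nat) \<Rightarrow> real^'v \<Rightarrow> real" where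
  "monom_V \<alpha> v = (\<Prod>i\<in>UNIV. (v $ i) ^ \<alpha> i)"

definition polyfun_V :: "(real^'v::finite \<Rightarrow> real) \<Rightarrow> bool" where
  "polyfun_V p \<longleftrightarrow> (\<exists>A c. finite A \<and> p = (\<lambda>v. \<Sum>\<alpha>\<in>A. c \<alpha> * monom_V \<alpha> v))"

definition homog_polyfun_V :: "nat \<Rightarrow> (real^'v::finite \<Rightarrow> real) \<Rightarrow> bool" where
  "homog_polyfun_V k p \<longleftrightarrow> (\<exists>A c. finite A \<and> (\<forall>\<alpha>\<in>A. (\<Sum>i\<in>UNIV. \<alpha> i) = k) \<and>
      p = (\<lambda>v. \<Sum>\<alpha>\<in>A. c \<alpha> * monom_V \<alpha> v))"

definition inv_poly :: "('g, 'b) monoid_scheme \<Rightarrow> ('g \<Rightarrow> real^'v^'v) \<Rightarrow> (real^'v::finite \<Rightarrow> real) \<Rightarrow> bool" where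
  "inv_poly G \<rho> p \<longleftrightarrow> polyfun_V p \<and> (\<forall>g\<in>carrier G. \<forall>v. p (\<rho> g *v v) = p v)"

definition generates_inv :: "('g, 'b) monoid_scheme \<Rightarrow> ('g \<Rightarrow> real^'v^'v) \<Rightarrow> nat \<Rightarrow> (nat \<Rightarrow> real^'v::finite \<Rightarrow> real) \<Rightarrow> bool" where
  "generates_inv G \<rho> n \<sigma> \<longleftrightarrow> (\<forall>p. inv_poly G \<rho> p \<longrightarrow>
     (\<exists>A c. finite A \<and> p = (\<lambda>v. \<Sum>\<beta>\<in>A. c \<beta> * (\<Prod>j\<in>{1..n}. (\<sigma> j v) ^ \<beta> j))))"

end

theory Submission imports Defs begin

lemma homog_bound:
  fixes p :: "real^'v::finite \<Rightarrow> real"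
  assumes "homog_polyfun_V k p"
  shows "\<exists>K\<ge>0. \<forall>v. \<bar>p v\<bar> \<le> K * norm v ^ k"
proof -
  obtain A c where A: "finite A" "\<forall>\<alpha>\<in>A. (\<Sum>i\<in>UNIV. \<alpha> i) = k"
    and p: "p = (\<lambda>v. \<Sum>\<alpha>\<in>A. c \<alpha> * monom_V \<alpha> v)"
    using assms unfolding homog_polyfun_V_def by blast
  have mon: "\<bar>monom_V \<alpha> v\<bar> \<le> norm v ^ k" if "\<alpha> \<in> A" for \<alpha> v
  proof -
    have "\<bar>monom_V \<alpha> v\<bar> = (\<Prod>i\<in>UNIV. \<bar>v $ i\<bar> ^ \<alpha> i)"
      unfolding monom_V_def by (simp add: abs_prod power_abs)
    also have "\<dots> \<le> (\<Prod>i\<in>UNIV. norm v ^ \<alpha> i)"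
      by (intro prod_mono conjI power_mono) (auto simp: component_le_norm_cart)
    also have "\<dots> = norm v ^ (\<Sum>i\<in>UNIV. \<alpha> i)" by (simp add: power_sum)
    finally show ?thesis using A that by simp
  qed
  have "\<bar>p v\<bar> \<le> (\<Sum>\<alpha>\<in>A. \<bar>c \<alpha>\<bar>) * norm v ^ k" for v
  proof -
    have "\<bar>p v\<bar> \<le> (\<Sum>\<alpha>\<in>A. \<bar>c \<alpha> * monom_V \<alpha> v\<bar>)" unfolding p by (rule sum_abs)
    also have "\<dots> \<le> (\<Sum>\<alpha>\<in>A. \<bar>c \<alpha>\<bar> * norm v ^ k)"
      by (intro sum_mono) (auto simp: abs_mult intro: mult_left_mono mon)
    finally show ?thesis by (simp add: sum_distrib_right)
  qed
  then show ?thesis by (intro exI[of _ "\<Sum>\<alpha>\<in>A. \<bar>c \<alpha>\<bar>"]) auto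
qed

lemma exp_cmp:
  fixes c D \<epsilon> :: real
  assumes "\<epsilon> > 0" "c > 0" "\<forall>t. 0 < t \<and> t < \<epsilon> \<longrightarrow> c * t ^ a \<le> D * t ^ b"
  shows "b \<le> a"
proof (rule ccontr)
  assume "\<not> b \<le> a"
  then have ab: "b = a + (b - a)" "b - a \<ge> 1" by auto
  define t where "t = min (\<epsilon>/2) (min (1/2) (c / (2*(\<bar>D\<bar>+1))))"
  have t0: "t > 0" using assms by (simp add: t_def)
  have t1: "t < 1" "t < \<epsilon>" using assms by (auto simp: t_def)
  have tc: "t \<le> c / (2*(\<bar>D\<bar>+1))" by (simp add: t_def)
  have "c * t ^ a \<le> D * (t ^ a * t ^ (b - a))"
    using assms(3) t0 t1 ab(1) by (metis power_add)
  then have "c \<le> D * t ^ (b - a)" using t0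
    by (smt (verit, ccfv_SIG) mult.assoc mult.commute mult_right_le_imp_le zero_less_power)
  also have "\<dots> \<le> \<bar>D\<bar> * t ^ (b - a)" using t0 by (simp add: mult_right_mono)
  also have "\<dots> \<le> \<bar>D\<bar> * t"
    using t0 t1 ab(2) by (intro mult_left_mono) (auto simp: power_le_one_iff intro: power_decreasing[of 1 "b-a" t, simplified])
  also have "\<dots> \<le> \<bar>D\<bar> * (c / (2*(\<bar>D\<bar>+1)))" using mult_left_mono[OF tc abs_ge_zero] .
  also have "\<dots> < c" using assms(2)
    by (simp add: field_simps) (smt (verit) mult_nonneg_nonneg abs_ge_zero mult_le_cancel_left1)
  finally show False by simp
qed

lemma monP:
  fixes q :: nat
  assumes "i < q"
  shows "(\<Prod>k<q. ((\<lambda>k. if k < q then (if k = i then t else s) else 0) k :: real) ^ a k)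
     = t ^ a i * (\<Prod>k\<in>{..<q}-{i}. s ^ a k)"
proof -
  have "(\<Prod>k<q. ((\<lambda>k. if k < q then (if k = i then t else s) else 0) k :: real) ^ a k)
      = ((\<lambda>k. if k < q then (if k = i then t else s) else 0) i) ^ a i *
        (\<Prod>k\<in>{..<q}-{i}. ((\<lambda>k. if k < q then (if k = i then t else s) else 0) k) ^ a k)"
    using assms by (subst prod.remove[of _ i]) auto
  also have "\<dots> = t ^ a i * (\<Prod>k\<in>{..<q}-{i}. s ^ a k)"
    using assms by (auto intro!: prod.cong)
  finally show ?thesis .
qed

lemma near0:
  assumes "cont_q q U h" "(\<lambda>_. 0) \<in> U" "h (\<lambda>_. 0) \<noteq> 0"
  shows "\<exists>r>0. \<forall>y\<in>U. (\<forall>i<q. \<bar>y i\<bar> < r) \<longrightarrow> \<bar>h y - h (\<lambda>_. 0)\<bar> < \<bar>h (\<lambda>_. 0)\<bar> / 2"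
  using assms unfolding cont_q_def
  by (metis (no_types, lifting) diff_zero half_gt_zero zero_less_abs_iff)

theorem lemma5p3:
  fixes G :: "('g, 'b) monoid_scheme"
    and \<rho> :: "'g \<Rightarrow> real^'v::finite^'v"
    and n :: nat
    and \<sigma> :: "nat \<Rightarrow> real^'v \<Rightarrow> real"
    and d :: "nat \<Rightarrow> nat"
    and Cls :: "nat \<Rightarrow> (nat \<Rightarrow> real) set \<Rightarrow> ((nat \<Rightarrow> real) \<Rightarrow> real) set"
    and q :: nat
    and U :: "(nat \<Rightarrow> real) set"
    and f g :: "nat \<Rightarrow> (nat \<Rightarrow> real) \<Rightarrow> real"
    and \<alpha> :: "nat \<Rightarrow> nat \<Rightarrow> nat"
  assumes grp: "group G"
    and hom: "\<forall>x\<in>carrier G. \<forall>y\<in>carrier G. \<rho> (x \<otimes>\<^bsub>G\<^esub> y) = \<rho> x ** \<rho> y"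
    and orth: "\<forall>x\<in>carrier G. orthogonal_matrix (\<rho> x)"
    and cpt: "compact (\<rho> ` carrier G)"
    and fix0: "{v. \<forall>x\<in>carrier G. \<rho> x *v v = v} = {0}"
    and n1: "1 \<le> n"
    and gens_inv: "\<forall>j\<in>{1..n}. inv_poly G \<rho> (\<sigma> j)"
    and gens_hom: "\<forall>j\<in>{1..n}. 0 < d j \<and> homog_polyfun_V (d j) (\<sigma> j)"
    and gens: "generates_inv G \<rho> n \<sigma>"
    and sigma1: "\<forall>v. \<sigma> 1 v = v \<bullet> v"
    and C: "C_class Cls"
    and U: "open_q q U" "(\<lambda>_. 0) \<in> U"
    and fC: "\<forall>j\<in>{1..n}. f j \<in> Cls q U"
    and fimg: "\<forall>x\<in>U. \<exists>v. \<forall>j\<in>{1..n}. f j x = \<sigma> j v"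
    and f1: "\<exists>x\<in>U. f 1 x \<noteq> 0"
    and fnormal: "\<forall>j\<in>{1..n}. (\<exists>x\<in>U. f j x \<noteq> 0) \<longrightarrow>
        g j \<in> Cls q U \<and> (\<forall>x\<in>U. g j x \<noteq> 0) \<and>
        (\<forall>x\<in>U. f j x = (\<Prod>i<q. (x i) ^ \<alpha> j i) * g j x)"
  shows "\<exists>\<delta> :: nat \<Rightarrow> nat. (\<forall>i<q. \<alpha> 1 i = 2 * \<delta> i) \<and>
     (\<forall>j\<in>{1..n}. (\<exists>x\<in>U. f j x \<noteq> 0) \<longrightarrow> (\<forall>i<q. d j * \<delta> i \<le> \<alpha> j i))"
proof -
  define P where "P = (\<lambda>i t s k. if k < q then (if k = i then t else s) else (0::real))"
  have PP: "(\<Prod>k<q. P i t s k ^ a k) = t ^ a i * (\<Prod>k\<in>{..<q}-{i}. s ^ a k)" if "i < q" for i t s a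
    using monP[OF that, of t s a] unfolding P_def by simp
  have Spos: "(\<Prod>k\<in>{..<q}-{i}. s ^ a k) > 0" if "s > 0" for s :: real and i a
    using that by (intro prod_pos) auto
  obtain e where e: "e > 0" "\<forall>y\<in>Rq q. (\<forall>i<q. \<bar>y i - 0\<bar> < e) \<longrightarrow> y \<in> U"
  proof -
    have "\<forall>x\<in>U. \<exists>e>0. \<forall>y\<in>Rq q. (\<forall>i<q. \<bar>y i - x i\<bar> < e) \<longrightarrow> y \<in> U"
      using U(1) unfolding open_q_def by blast
    from bspec[OF this U(2)] show ?thesis using that by blast
  qed
  have PU: "P i t s \<in> U" if "\<bar>t\<bar> < e" "\<bar>s\<bar> < e" for i t s
  proof -
    have "P i t s \<in> Rq q" by (simp add: P_def Rq_def)
    moreover have "\<forall>k<q. \<bar>P i t s k - 0\<bar> < e" using that by (simp add: P_def)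
    ultimately show ?thesis using e(2) by blast
  qed
  have Pbox: "\<forall>k<q. \<bar>P i t s k\<bar> < r" if "\<bar>t\<bar> < r" "\<bar>s\<bar> < r" for i t s r
    using that by (simp add: P_def)
  note CC = C[unfolded C_class_def, THEN spec[of _ q], THEN spec[of _ U], THEN mp, OF U(1)]
  have Cq: "\<forall>h\<in>Cls q U. smooth_q q U h" using conjunct1[OF conjunct2[OF CC]] .
  have gfacts: "g j \<in> Cls q U \<and> (\<forall>x\<in>U. g j x \<noteq> 0) \<and>
        (\<forall>x\<in>U. f j x = (\<Prod>i<q. (x i) ^ \<alpha> j i) * g j x)"
    if "j \<in> {1..n}" "\<exists>x\<in>U. f j x \<noteq> 0" for j
    using fnormal that by blast
  have near: "\<exists>r>0. \<forall>y\<in>U. (\<forall>i<q. \<bar>y i\<bar> < r) \<longrightarrow> \<bar>g j y - g j (\<lambda>_. 0)\<bar> < \<bar>g j (\<lambda>_. 0)\<bar> / 2"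
    if "j \<in> {1..n}" "\<exists>x\<in>U. f j x \<noteq> 0" for j
  proof (rule near0)
    have "smooth_q q U (g j)" using Cq gfacts[OF that] by blast
    then have "cont_q q U (iter_partial [] (g j))" unfolding smooth_q_def by (metis empty_set empty_subsetI)
    then show "cont_q q U (g j)" by simp
    show "(\<lambda>_. 0) \<in> U" by (rule U(2))
    show "g j (\<lambda>_. 0) \<noteq> 0" using gfacts[OF that] U(2) by blast
  qed
  have one: "1 \<in> {1..n}" using n1 by simp
  have f1nn: "f 1 x \<ge> 0" if "x \<in> U" for x
  proof -
    from bspec[OF fimg that] obtain v where v: "\<forall>j\<in>{1..n}. f j x = \<sigma> j v" ..
    have "f 1 x = \<sigma> 1 v" using bspec[OF v one] .
    also have "\<dots> = v \<bullet> v" using sigma1 by blast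
    finally show ?thesis using inner_ge_zero[of v] by (simp only:)
  qed
  note g1 = gfacts[OF one f1]
  obtain r1 where r1: "r1 > 0" "\<forall>y\<in>U. (\<forall>i<q. \<bar>y i\<bar> < r1) \<longrightarrow> \<bar>g 1 y - g 1 (\<lambda>_. 0)\<bar> < \<bar>g 1 (\<lambda>_. 0)\<bar> / 2"
    using near[OF one f1] by (elim exE conjE) (rule that)
  define \<epsilon>1 where "\<epsilon>1 = min e r1"
  have \<epsilon>1: "\<epsilon>1 > 0" "\<epsilon>1 \<le> e" "\<epsilon>1 \<le> r1" using e(1) r1(1) by (auto simp: \<epsilon>1_def)
  have g1pos: "g 1 y > 0" if "y \<in> U" "\<forall>i<q. \<bar>y i\<bar> < r1" "i < q" for y i
  proof -
    define s where "s = \<epsilon>1 / 2"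
    have s: "s > 0" "s < e" "s < r1" using \<epsilon>1 by (auto simp: s_def)
    have pU: "P i s s \<in> U" using PU s by simp
    define A where "A = s ^ \<alpha> 1 i * (\<Prod>k\<in>{..<q}-{i}. s ^ \<alpha> 1 k)"
    have fe: "f 1 (P i s s) = A * g 1 (P i s s)"
      using g1 pU PP[OF that(3)] by (simp add: A_def)
    have Apos: "A > 0" using s Spos by (simp add: A_def)
    have "0 \<le> A * g 1 (P i s s)" using f1nn[OF pU] fe by simp
    then have "g 1 (P i s s) \<ge> 0" using Apos by (simp add: zero_le_mult_iff)
    moreover have "g 1 (P i s s) \<noteq> 0" using g1 pU by blast
    ultimately have gp: "g 1 (P i s s) > 0" by linarith
    have "\<bar>g 1 (P i s s) - g 1 (\<lambda>_. 0)\<bar> < \<bar>g 1 (\<lambda>_. 0)\<bar> / 2"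
      using r1(2) pU Pbox[of s r1 s i] s by simp
    then have g0: "g 1 (\<lambda>_. 0) > 0" using gp by (auto simp: abs_if split: if_split_asm)
    have "\<bar>g 1 y - g 1 (\<lambda>_. 0)\<bar> < \<bar>g 1 (\<lambda>_. 0)\<bar> / 2" using r1(2) that by blast
    then show ?thesis using g0 by (auto simp: abs_if split: if_split_asm)
  qed
  have ev: "even (\<alpha> 1 i)" if "i < q" for i
  proof (rule ccontr)
    assume odd: "odd (\<alpha> 1 i)"
    define s where "s = \<epsilon>1 / 2"
    have s: "s > 0" "s < e" "s < r1" using \<epsilon>1 by (auto simp: s_def)
    have pU: "P i (-s) s \<in> U" using PU s by simp
    have gp: "g 1 (P i (-s) s) > 0" using g1pos[OF pU _ that] Pbox[of "-s" r1 s i] s by simp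
    have "f 1 (P i (-s) s) = (-s) ^ \<alpha> 1 i * (\<Prod>k\<in>{..<q}-{i}. s ^ \<alpha> 1 k) * g 1 (P i (-s) s)"
      using g1 pU PP[OF that] by simp
    also have "\<dots> = - (s ^ \<alpha> 1 i * (\<Prod>k\<in>{..<q}-{i}. s ^ \<alpha> 1 k) * g 1 (P i (-s) s))"
      using odd by (simp add: power_minus_odd)
    also have "\<dots> < 0" using gp s Spos[OF s(1)] by (simp add: mult_pos_pos)
    finally show False using f1nn[OF pU] by simp
  qed
  define \<delta> where "\<delta> i = \<alpha> 1 i div 2" for i
  have d1: "\<forall>i<q. \<alpha> 1 i = 2 * \<delta> i" using ev by (auto simp: \<delta>_def)
  have "d j * \<delta> i \<le> \<alpha> j i" if j: "j \<in> {1..n}" "\<exists>x\<in>U. f j x \<noteq> 0" and i: "i < q" for j i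
  proof -
    note gj = gfacts[OF j]
    obtain K where K: "K \<ge> 0" "\<forall>v. \<bar>\<sigma> j v\<bar> \<le> K * norm v ^ d j"
      using homog_bound gens_hom j(1) by blast
    obtain rj where rj: "rj > 0" "\<forall>y\<in>U. (\<forall>i<q. \<bar>y i\<bar> < rj) \<longrightarrow> \<bar>g j y - g j (\<lambda>_. 0)\<bar> < \<bar>g j (\<lambda>_. 0)\<bar> / 2"
      using near[OF j] by blast
    define \<epsilon> where "\<epsilon> = min \<epsilon>1 rj"
    have \<epsilon>: "\<epsilon> > 0" "\<epsilon> \<le> e" "\<epsilon> \<le> r1" "\<epsilon> \<le> rj" using \<epsilon>1 rj by (auto simp: \<epsilon>_def)
    define s where "s = \<epsilon> / 2"
    have s: "s > 0" "s < \<epsilon>" using \<epsilon> by (auto simp: s_def)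
    define Sj where "Sj = (\<Prod>k\<in>{..<q}-{i}. s ^ \<alpha> j k)"
    define S1 where "S1 = (\<Prod>k\<in>{..<q}-{i}. s ^ \<alpha> 1 k)"
    have Sj: "Sj > 0" "S1 > 0" using Spos[OF s(1)] by (auto simp: Sj_def S1_def)
    define mj where "mj = \<bar>g j (\<lambda>_. 0)\<bar> / 2"
    define M1 where "M1 = 3 * \<bar>g 1 (\<lambda>_. 0)\<bar> / 2"
    have mj: "mj > 0" using gj U(2) by (auto simp: mj_def)
    have M1: "M1 \<ge> 0" by (simp add: M1_def)
    have key: "((Sj * mj)^2) * t ^ (2 * \<alpha> j i) \<le> (K^2 * (S1 * M1) ^ d j) * t ^ (2 * \<delta> i * d j)"
      if t: "0 < t" "t < \<epsilon>" for t
    proof -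
      have tU: "P i t s \<in> U" using PU t s \<epsilon> by simp
      have tb: "\<forall>k<q. \<bar>P i t s k\<bar> < rj" "\<forall>k<q. \<bar>P i t s k\<bar> < r1"
        using Pbox[of t rj s i] Pbox[of t r1 s i] t s \<epsilon> by auto
      have gjb: "\<bar>g j (P i t s)\<bar> \<ge> mj" proof -
        have "\<bar>g j (P i t s) - g j (\<lambda>_. 0)\<bar> < \<bar>g j (\<lambda>_. 0)\<bar> / 2" using rj(2) tU tb(1) by blast
        then show ?thesis unfolding mj_def by linarith
      qed
      have g1b: "\<bar>g 1 (P i t s)\<bar> \<le> M1" proof -
        have "\<bar>g 1 (P i t s) - g 1 (\<lambda>_. 0)\<bar> < \<bar>g 1 (\<lambda>_. 0)\<bar> / 2" using r1(2) tU tb(2) by blast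
        then show ?thesis unfolding M1_def by linarith
      qed
      from bspec[OF fimg tU] obtain v where v: "\<forall>j\<in>{1..n}. f j (P i t s) = \<sigma> j v" ..
      have fj: "f j (P i t s) = t ^ \<alpha> j i * Sj * g j (P i t s)"
        using gj tU PP[OF i] by (simp add: Sj_def)
      have f1e: "f 1 (P i t s) = t ^ (2 * \<delta> i) * S1 * g 1 (P i t s)"
        using g1 tU PP[OF i] d1 i by (simp add: S1_def)
      have nv: "f 1 (P i t s) = norm v ^ 2" using v one sigma1 by (simp add: power2_norm_eq_inner)
      have "\<bar>f j (P i t s)\<bar> \<le> K * norm v ^ d j" using v K j by simp
      then have "\<bar>f j (P i t s)\<bar>^2 \<le> (K * norm v ^ d j)^2"
        by (intro power_mono) auto
      also have "\<dots> = K^2 * (norm v ^ 2) ^ d j" by (simp add: power_mult_distrib power_mult[symmetric] mult.commute)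
      also have "\<dots> = K^2 * \<bar>f 1 (P i t s)\<bar> ^ d j" using nv by simp
      also have "\<dots> \<le> K^2 * (t ^ (2 * \<delta> i) * S1 * M1) ^ d j"
      proof -
        have "\<bar>f 1 (P i t s)\<bar> \<le> t ^ (2 * \<delta> i) * S1 * M1"
          using f1e g1b t Sj by (simp add: abs_mult mult_left_mono)
        then show ?thesis by (intro mult_left_mono power_mono) auto
      qed
      also have "\<dots> = (K^2 * (S1 * M1) ^ d j) * t ^ (2 * \<delta> i * d j)"
        by (simp add: power_mult_distrib power_mult)
      finally have up: "\<bar>f j (P i t s)\<bar>^2 \<le> (K^2 * (S1 * M1) ^ d j) * t ^ (2 * \<delta> i * d j)" .
      have "t ^ \<alpha> j i * Sj * mj \<le> \<bar>f j (P i t s)\<bar>"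
        using fj gjb t Sj by (simp add: abs_mult mult_left_mono)
      then have "(t ^ \<alpha> j i * Sj * mj)^2 \<le> \<bar>f j (P i t s)\<bar>^2"
        using t Sj mj by (intro power_mono) auto
      moreover have "(t ^ \<alpha> j i * Sj * mj)^2 = ((Sj * mj)^2) * t ^ (2 * \<alpha> j i)"
        by (simp add: power_mult_distrib power_even_eq)
      ultimately show ?thesis using up by linarith
    qed
    have "2 * \<delta> i * d j \<le> 2 * \<alpha> j i"
      by (rule exp_cmp[OF \<epsilon>(1), of "(Sj * mj)^2" _ "K^2 * (S1 * M1) ^ d j"]) (use key Sj mj in auto)
    then show ?thesis by (simp add: mult.commute)
  qed
  then show ?thesis using d1 by blast
qed

end
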